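(* If $f\in\mathcal S(X)$ is skew invertible (as an element of $\mathcal F(X)$), then its skew inverse $f^{\langle-1\rangle}$ belongs to $\mathcal S(X)$.
   Context: Let $K$ be a skew field, $K^*=K\setminus\{0\}$, and $X$ a nonempty set with a left $K^*$-action $(a,x)\mapsto{}^{a}x$. $\mathcal F(X)$ is the set of functions $X\to K$ with pointwise addition; the constant function with value $a\in K$ is denoted $a$. The skew product is $(f\diamond g)(x)=f({}^{g(x)}x)\,g(x)$ if $g(x)\neq0$ and $0$ if $g(x)=0$. A function $f$ is skew convex if $f\diamond(a+b)=f\diamond a+f\diamond b$ for all $a,b\in K$; $\mathcal S(X)$ is the set of skew-convex functions. $f\in\mathcal F(X)$ is skew invertible if there is $g\in\mathcal F(X)$ with $f\diamond g=g\diamond f=1$; then $g$ is called the skew inverse $f^{\langle-1\rangle}$. *)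

theory Defs
  imports Main
begin

text \<open>A left action of the multiplicative group K* of a skew field K (type class
division_ring) on a set X (the type 'x). The action map is total on K, but only its
values at nonzero scalars are constrained/used.\<close>
definition left_action :: "('k::division_ring \<Rightarrow> 'x \<Rightarrow> 'x) \<Rightarrow> bool" where
  "left_action act \<longleftrightarrow>
     (\<forall>x. act 1 x = x) \<and>
     (\<forall>a b x. a \<noteq> 0 \<longrightarrow> b \<noteq> 0 \<longrightarrow> act (a * b) x = act a (act b x))"

definition skew_prod ::
  "('k::division_ring \<Rightarrow> 'x \<Rightarrow> 'x) \<Rightarrow> ('x \<Rightarrow> 'k) \<Rightarrow> ('x \<Rightarrow> 'k) \<Rightarrow> ('x \<Rightarrow> 'k)" where
  "skew_prod act f g = (\<lambda>x. if g x = 0 then 0 else f (act (g x) x) * g x)"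

definition skew_convex :: "('k::division_ring \<Rightarrow> 'x \<Rightarrow> 'x) \<Rightarrow> ('x \<Rightarrow> 'k) \<Rightarrow> bool" where
  "skew_convex act f \<longleftrightarrow>
     (\<forall>a b x. skew_prod act f (\<lambda>_. a + b) x =
               skew_prod act f (\<lambda>_. a) x + skew_prod act f (\<lambda>_. b) x)"

definition skew_inverse :: "('k::division_ring \<Rightarrow> 'x \<Rightarrow> 'x) \<Rightarrow> ('x \<Rightarrow> 'k) \<Rightarrow> ('x \<Rightarrow> 'k) \<Rightarrow> bool" where
  "skew_inverse act f g \<longleftrightarrow> skew_prod act f g = (\<lambda>_. 1) \<and> skew_prod act g f = (\<lambda>_. 1)"

end

theory Submission
  imports Defs
begin

theorem lemma2p8:
  fixes act :: "'k::division_ring \<Rightarrow> 'x \<Rightarrow> 'x"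
    and f g :: "'x \<Rightarrow> 'k"
  assumes "left_action act"
    and "skew_convex act f"
    and "skew_inverse act f g"
  shows "skew_convex act g"
proof -
  have A: "\<And>a b x. a \<noteq> 0 \<Longrightarrow> b \<noteq> 0 \<Longrightarrow> act (a * b) x = act a (act b x)"
    using assms(1) unfolding left_action_def by blast
  have fg: "\<And>x. (if g x = 0 then 0 else f (act (g x) x) * g x) = 1"
    using assms(3) unfolding skew_inverse_def skew_prod_def by meson
  have gf: "\<And>x. (if f x = 0 then 0 else g (act (f x) x) * f x) = 1"
    using assms(3) unfolding skew_inverse_def skew_prod_def by meson
  have gnz: "\<And>x. g x \<noteq> 0" using fg by (metis zero_neq_one)
  have fnz: "\<And>x. f x \<noteq> 0" using gf by (metis zero_neq_one)
  have fg1: "\<And>x. f (act (g x) x) * g x = 1" using fg gnz by metis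
  have gf1: "\<And>x. g (act (f x) x) * f x = 1" using gf fnz by metis
  define P where "P x c = (if c = 0 then 0 else f (act c x) * c)" for x c
  define Q where "Q x c = (if c = 0 then 0 else g (act c x) * c)" for x c
  have Padd: "\<And>x a b. P x (a + b) = P x a + P x b"
    using assms(2) unfolding skew_convex_def skew_prod_def P_def by simp
  have PQ: "P x (Q x c) = c" for x c
  proof (cases "c = 0")
    case True then show ?thesis by (simp add: P_def Q_def)
  next
    case False
    have ne: "g (act c x) * c \<noteq> 0" using False gnz by simp
    have "P x (Q x c) = f (act (g (act c x) * c) x) * (g (act c x) * c)"
      using False ne by (simp add: P_def Q_def)
    also have "\<dots> = (f (act (g (act c x)) (act c x)) * g (act c x)) * c"
      using A[OF gnz False] by (simp add: mult.assoc)
    also have "\<dots> = c" using fg1 by simp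
    finally show ?thesis .
  qed
  have QP: "Q x d = c" if "P x c = d" for x c d
  proof (cases "c = 0")
    case True then show ?thesis using that by (simp add: P_def Q_def)
  next
    case False
    have ne: "f (act c x) * c \<noteq> 0" using False fnz by simp
    have "Q x d = g (act (f (act c x) * c) x) * (f (act c x) * c)"
      using False ne that by (simp add: P_def Q_def)
    also have "\<dots> = (g (act (f (act c x)) (act c x)) * f (act c x)) * c"
      using A[OF fnz False] by (simp add: mult.assoc)
    also have "\<dots> = c" using gf1 by simp
    finally show ?thesis .
  qed
  have Qadd: "Q x (a + b) = Q x a + Q x b" for x a b
  proof -
    have "P x (Q x a + Q x b) = a + b" using Padd PQ by simp
    then show ?thesis using QP by blast
  qed
  show ?thesis unfolding skew_convex_def skew_prod_def using Qadd by (simp add: Q_def)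
qed

end
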